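(* Let $\mathcal{M}=\langle\mathcal{X},X_W,\Phi,\mathcal{B}\rangle$ be a system of constraints with $\mathcal{B}=\langle V,F,E\rangle$, let $\langle T_I,T_C,T_O\rangle$ be the coarse decomposition of the subgraph of $\mathcal{B}$ induced by $(V\setminus W)\cup F$ and $\mathrm{CO}(\mathcal{B})=\langle\mathcal{V},\mathcal{E}\rangle$ the causal ordering graph. Assume $\mathcal{M}$ is maximally uniquely solvable w.r.t. $\mathrm{CO}(\mathcal{B})$ and let $X^*$ be a solution of $\mathcal{M}$. Let $S_F\subseteq(T_C\cup T_O)\cap F$ and $S_V\subseteq(T_C\cup T_O)\cap(V\setminus W)$ be such that $S_F\cup S_V\in\mathcal{V}$, let $\xi_{S_V}\in\mathcal{X}_{S_V}$, and let $X'$ be a solution of the intervened system $\mathcal{M}_{\mathrm{do}(S_F,S_V,\xi_{S_V})}$. If there is no directed path in $\mathrm{CO}(\mathcal{B})$ from any $x\in S_V$ to $v\in(T_C\cup T_O)\cap V$, then $X^*_v=X'_v$ almost surely. (If there is $x\in S_V$ with a directed path from $x$ to $v$ in $\mathrm{CO}(\mathcal{B})$, then $X^*_v$ may have a different distribution than $X'_v$.)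
   Context: System of constraints $\langle\mathcal{X},X_W,\Phi,\mathcal{B}\rangle$: $\mathcal{X}=\bigotimes_{v\in V}\mathcal{X}_v$ standard measurable spaces; $W\subseteq V$ and $X_W=(X_w)_{w\in W}$ independent random variables; $\Phi=(\Phi_f)_{f\in F}$, $\Phi_f=\langle\phi_f,c_f,V(f)\rangle$, $V(f)\subseteq V$, $c_f$ a constant in a standard measurable space, $\phi_f:\mathcal{X}_{V(f)}\to\mathcal{Y}$ measurable; $\mathcal{B}=\langle V,F,E\rangle$ with $E=\{(f-v):v\in V(f)\}$; $V(S_F)=\bigcup_{f\in S_F}V(f)$. A solution is a measurable $g:\mathcal{X}_W\to\mathcal{X}_{V\setminus W}$ with $\phi_f(g_{V(f)\setminus W}(X_W),X_{V(f)\cap W})=c_f$ for all $f$ a.s. (the solution random vector has components $g(X_W)$). Solvable w.r.t. $S_F\subseteq F$, $S_V\subseteq V(S_F)\setminus W$: there is a measurable $g_{S_V}:\mathcal{X}_{V(S_F)\setminus S_V}\to\mathcal{X}_{S_V}$ such that a.s., for all $x_{V(S_F)\setminus W}$, $x_{S_V}=g_{S_V}(x_{V(S_F)\setminus(S_V\cup W)},X_{V(S_F)\cap W})$ implies $\phi_f(x_{V(f)\setminus W},X_{V(f)\cap W})=c_f$ for all $f\in S_F$; uniquely solvable if the converse holds as well. Perfect intervention: for a single pair $(f,v)$ with $v\in V\setminus W$ and $\xi_v\in\mathcal{X}_v$, $\mathcal{M}_{\mathrm{do}(f,v,\xi_v)}$ replaces $\Phi_f$ by $\langle x_v\mapsto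 x_v,\ \xi_v,\ \{v\}\rangle$ and replaces $\mathcal{B}$ by $\langle V,F,E'\rangle$ with $E'$ = edges of $E$ not incident to $f$, plus $(v-f)$. For tuples $S_F=(f_1,\dots,f_n)$, $S_V=(v_1,\dots,v_n)$ (enumerations of the sets), $\mathrm{do}(S_F,S_V,\xi_{S_V})$ performs these interventions for all pairs $(f_i,v_i)$. Graph notions: $\mathrm{adj}(X)$ = neighbours; $F'\subseteq F$ self-contained if $|F'|=|\mathrm{adj}(F')|$ and $|F''|\le|\mathrm{adj}(F'')|$ for $F''\subseteq F'$; minimal self-contained = non-empty self-contained with no non-empty strict self-contained subset. For a maximum matching $M$, an alternating path is a sequence of distinct vertices (possibly one) with consecutive ones adjacent and edges alternating between not in $M$ and in $M$; coarse decomposition: $T_I$ = vertices joined by an alternating path to an unmatched variable vertex, $T_O$ = to an unmatched constraint vertex, $T_C$ = the rest. $\mathrm{CO}(\mathcal{B})=\langle\mathcal{V},\mathcal{E}\rangle$ is a partition of $V\cup F$ into clusters with edges $x\to C$ ($\mathrm{cl}(x)$ the cluster of $x$): with $\mathcal{B}'$ the subgraph induced by $(V\setminus W)\cup F$ and $\mathcal{B}_I,\mathcal{B}_C,\mathcal{B}_O$ the subgraphs induced by $T_I,T_C,T_O$: on $\mathcal{B}_C$, while the current graph $\mathcal{B}''$ is non-null, choose a minimal self-contained $S'_F$ of $\mathcal{B}''$, form cluster $C=S'_F\cup\mathrm{adj}_{\mathcal{B}''}(S'_F)$, add edges $v\to C$ for $v\in\mathrm{adj}_{\mathcal{B}_C}(S'_F)\setminus\mathrm{adj}_{\mathcal{B}''}(S'_F)$,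 delete $C$. Other clusters: connected components of $\mathcal{B}_I$ and $\mathcal{B}_O$, and $\{w\}$, $w\in W$. Further edges: $v\to\mathrm{cl}(f)$ for each edge $(v-f)$ with $v\in(T_O\cup T_C)\cap V$, $f\in T_I\cap F$, or $v\in T_O\cap V$, $f\in T_C\cap F$; and $w\to\mathrm{cl}(f)$ for $w\in W$, $f\in\mathrm{adj}_{\mathcal{B}}(w)$. A directed path from $x$ to $y$ exists if $\mathrm{cl}(x)=\mathrm{cl}(y)$ or there are clusters $V_1=\mathrm{cl}(x),\dots,V_k=\mathrm{cl}(y)$ with, for each $i<k$, some $z_i\in V_i$ and $(z_i\to V_{i+1})\in\mathcal{E}$. Maximally uniquely solvable w.r.t. $\mathrm{CO}(\mathcal{B})$: uniquely solvable w.r.t. $S\cap F$, $S\cap V$ for every cluster $S$ with $S\cap W=\emptyset$, $S\cap T_I=\emptyset$, and solvable w.r.t. $T_I\cap F$ and $(T_I\cap V)\setminus W$. *)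

theory Defs
  imports "HOL-Probability.Probability"
begin

text \<open>Variables have index type 'v, constraints index type 'f; all values (of variables and
of constraint outputs/constants) live in one ambient type 'a, each variable / constraint
carrying its own measurable space on 'a.  Configurations x_A are extensional functions
in the product space PiM A (xsp S).\<close>

record ('v, 'f, 'a) csys =
  vars  :: "'v set"
  cons  :: "'f set"
  exo   :: "'v set"
  xsp   :: "'v \<Rightarrow> 'a measure"
  scope :: "'f \<Rightarrow> 'v set"
  phi   :: "'f \<Rightarrow> ('v \<Rightarrow> 'a) \<Rightarrow> 'a"    (* phi_f, applied to x_{V(f)} *)
  cst   :: "'f \<Rightarrow> 'a"
  cod   :: "'f \<Rightarrow> 'a measure"

definition standard_space :: "'a measure \<Rightarrow> bool" where
  "standard_space M \<longleftrightarrow> (\<exists>(B::real set) f g. B \<in> sets borel \<and>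
      f \<in> M \<rightarrow>\<^sub>M restrict_space borel B \<and> g \<in> restrict_space borel B \<rightarrow>\<^sub>M M \<and>
      (\<forall>x\<in>space M. g (f x) = x) \<and> (\<forall>y\<in>B. f (g y) = y))"

definition wf_csys :: "('v,'f,'a) csys \<Rightarrow> 'o measure \<Rightarrow> ('v \<Rightarrow> 'o \<Rightarrow> 'a) \<Rightarrow> bool" where
  "wf_csys S P X \<longleftrightarrow>
     finite (vars S) \<and> finite (cons S) \<and> exo S \<subseteq> vars S \<and>
     (\<forall>v\<in>vars S. standard_space (xsp S v)) \<and>
     (\<forall>f\<in>cons S. scope S f \<subseteq> vars S \<and> standard_space (cod S f) \<and>
         cst S f \<in> space (cod S f) \<and>
         phi S f \<in> PiM (scope S f) (xsp S) \<rightarrow>\<^sub>M cod S f) \<and>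
     prob_space P \<and>
     (\<forall>w\<in>exo S. X w \<in> P \<rightarrow>\<^sub>M xsp S w) \<and>
     prob_space.indep_vars P (xsp S) X (exo S)"

definition mergeX :: "('v,'f,'a) csys \<Rightarrow> ('v \<Rightarrow> 'o \<Rightarrow> 'a) \<Rightarrow> 'o \<Rightarrow> ('v \<Rightarrow> 'a) \<Rightarrow> ('v \<Rightarrow> 'a)" where
  "mergeX S X \<omega> x = (\<lambda>v. if v \<in> exo S then X v \<omega> else x v)"

definition solvec :: "('v,'f,'a) csys \<Rightarrow> ('v \<Rightarrow> 'o \<Rightarrow> 'a) \<Rightarrow> (('v \<Rightarrow> 'a) \<Rightarrow> ('v \<Rightarrow> 'a)) \<Rightarrow> 'o \<Rightarrow> ('v \<Rightarrow> 'a)" where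
  "solvec S X g \<omega> = (\<lambda>v\<in>vars S. if v \<in> exo S then X v \<omega> else g (\<lambda>w\<in>exo S. X w \<omega>) v)"

definition is_solution :: "('v,'f,'a) csys \<Rightarrow> 'o measure \<Rightarrow> ('v \<Rightarrow> 'o \<Rightarrow> 'a) \<Rightarrow> (('v \<Rightarrow> 'a) \<Rightarrow> ('v \<Rightarrow> 'a)) \<Rightarrow> bool" where
  "is_solution S P X g \<longleftrightarrow>
     g \<in> PiM (exo S) (xsp S) \<rightarrow>\<^sub>M PiM (vars S - exo S) (xsp S) \<and>
     (AE \<omega> in P. \<forall>f\<in>cons S. phi S f (restrict (solvec S X g \<omega>) (scope S f)) = cst S f)"

definition VS :: "('v,'f,'a) csys \<Rightarrow> 'f set \<Rightarrow> 'v set" where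
  "VS S Fs = (\<Union>f\<in>Fs. scope S f)"

text \<open>Solvability w.r.t. S_F (Fs), S_V (Vs).  The endogenous configuration x ranges over
X_{(V(S_F) \<union> S_V)\W}, which is X_{V(S_F)\W} whenever S_V \<subseteq> V(S_F)\W.\<close>
definition solv_cond :: "('v,'f,'a) csys \<Rightarrow> ('v \<Rightarrow> 'o \<Rightarrow> 'a) \<Rightarrow> 'f set \<Rightarrow> 'v set
     \<Rightarrow> (('v \<Rightarrow> 'a) \<Rightarrow> ('v \<Rightarrow> 'a)) \<Rightarrow> 'o \<Rightarrow> ('v \<Rightarrow> 'a) \<Rightarrow> bool \<times> bool" where
  "solv_cond S X Fs Vs g \<omega> x =
     (restrict x Vs = g (restrict (mergeX S X \<omega> x) (VS S Fs - Vs)),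
      (\<forall>f\<in>Fs. phi S f (restrict (mergeX S X \<omega> x) (scope S f)) = cst S f))"

definition solvable :: "('v,'f,'a) csys \<Rightarrow> 'o measure \<Rightarrow> ('v \<Rightarrow> 'o \<Rightarrow> 'a) \<Rightarrow> 'f set \<Rightarrow> 'v set \<Rightarrow> bool" where
  "solvable S P X Fs Vs \<longleftrightarrow> (\<exists>g. g \<in> PiM (VS S Fs - Vs) (xsp S) \<rightarrow>\<^sub>M PiM Vs (xsp S) \<and>
     (AE \<omega> in P. \<forall>x\<in>space (PiM ((VS S Fs \<union> Vs) - exo S) (xsp S)).
        fst (solv_cond S X Fs Vs g \<omega> x) \<longrightarrow> snd (solv_cond S X Fs Vs g \<omega> x)))"

definition uniquely_solvable :: "('v,'f,'a) csys \<Rightarrow> 'o measure \<Rightarrow> ('v \<Rightarrow> 'o \<Rightarrow> 'a) \<Rightarrow> 'f set \<Rightarrow> 'v set \<Rightarrow> bool" where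
  "uniquely_solvable S P X Fs Vs \<longleftrightarrow> (\<exists>g. g \<in> PiM (VS S Fs - Vs) (xsp S) \<rightarrow>\<^sub>M PiM Vs (xsp S) \<and>
     (AE \<omega> in P. \<forall>x\<in>space (PiM ((VS S Fs \<union> Vs) - exo S) (xsp S)).
        fst (solv_cond S X Fs Vs g \<omega> x) \<longleftrightarrow> snd (solv_cond S X Fs Vs g \<omega> x)))"

text \<open>Perfect intervention do(S_F, S_V, xi): sigma pairs f_i with v_i (an enumeration of both
sets is the same as a bijection S_F -> S_V).  The bipartite graph of a system is determined by
the scopes V(f), so replacing V(f_i) by {v_i} realises the graph E'.\<close>
definition do_sys :: "('v,'f,'a) csys \<Rightarrow> 'f set \<Rightarrow> ('f \<Rightarrow> 'v) \<Rightarrow> ('v \<Rightarrow> 'a) \<Rightarrow> ('v,'f,'a) csys" where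
  "do_sys S Fs \<sigma> \<xi> = S\<lparr>
     scope := (\<lambda>f. if f \<in> Fs then {\<sigma> f} else scope S f),
     phi := (\<lambda>f. if f \<in> Fs then (\<lambda>x. x (\<sigma> f)) else phi S f),
     cst := (\<lambda>f. if f \<in> Fs then \<xi> (\<sigma> f) else cst S f),
     cod := (\<lambda>f. if f \<in> Fs then xsp S (\<sigma> f) else cod S f)\<rparr>"

type_synonym ('v, 'f) node = "'v + 'f"

definition adjB :: "('v,'f,'a) csys \<Rightarrow> ('v,'f) node \<Rightarrow> ('v,'f) node \<Rightarrow> bool" where
  "adjB S a b \<longleftrightarrow> (\<exists>v f. f \<in> cons S \<and> v \<in> vars S \<and> v \<in> scope S f \<and>
      ((a = Inl v \<and> b = Inr f) \<or> (a = Inr f \<and> b = Inl v)))"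

definition Vp :: "('v,'f,'a) csys \<Rightarrow> ('v,'f) node set" where
  "Vp S = Inl ` (vars S - exo S) \<union> Inr ` cons S"

definition nbrs :: "('v,'f,'a) csys \<Rightarrow> ('v,'f) node set \<Rightarrow> ('v,'f) node set \<Rightarrow> ('v,'f) node set" where
  "nbrs S R A = {b\<in>R. \<exists>a\<in>A. adjB S a b}"

definition matching :: "('v,'f,'a) csys \<Rightarrow> ('f \<times> 'v) set \<Rightarrow> bool" where
  "matching S M \<longleftrightarrow>
     M \<subseteq> {(f, v). f \<in> cons S \<and> v \<in> vars S - exo S \<and> v \<in> scope S f} \<and>
     (\<forall>(f, v)\<in>M. \<forall>(f', v')\<in>M. f = f' \<longleftrightarrow> v = v')"

definition max_matching :: "('v,'f,'a) csys \<Rightarrow> ('f \<times> 'v) set \<Rightarrow> bool" where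
  "max_matching S M \<longleftrightarrow> matching S M \<and> (\<forall>M'. matching S M' \<longrightarrow> card M' \<le> card M)"

definition matched :: "('f \<times> 'v) set \<Rightarrow> ('v,'f) node \<Rightarrow> bool" where
  "matched M x \<longleftrightarrow> (\<exists>f v. (f, v) \<in> M \<and> (x = Inl v \<or> x = Inr f))"

definition inM :: "('f \<times> 'v) set \<Rightarrow> ('v,'f) node \<Rightarrow> ('v,'f) node \<Rightarrow> bool" where
  "inM M a b \<longleftrightarrow> (\<exists>f v. (f, v) \<in> M \<and> ((a = Inl v \<and> b = Inr f) \<or> (a = Inr f \<and> b = Inl v)))"

definition alt_path :: "('v,'f,'a) csys \<Rightarrow> ('f \<times> 'v) set \<Rightarrow> ('v,'f) node list \<Rightarrow> bool" where
  "alt_path S M p \<longleftrightarrow> p \<noteq> [] \<and> distinct p \<and> set p \<subseteq> Vp S \<and>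
     (\<forall>i. Suc i < length p \<longrightarrow> adjB S (p ! i) (p ! Suc i) \<and>
                                 (inM M (p ! i) (p ! Suc i) \<longleftrightarrow> odd i))"

definition T_I :: "('v,'f,'a) csys \<Rightarrow> ('f \<times> 'v) set \<Rightarrow> ('v,'f) node set" where
  "T_I S M = {x. \<exists>p u. alt_path S M p \<and> u \<in> vars S - exo S \<and> \<not> matched M (Inl u) \<and>
                      hd p = Inl u \<and> last p = x}"

definition T_O :: "('v,'f,'a) csys \<Rightarrow> ('f \<times> 'v) set \<Rightarrow> ('v,'f) node set" where
  "T_O S M = {x. \<exists>p f. alt_path S M p \<and> f \<in> cons S \<and> \<not> matched M (Inr f) \<and>
                      hd p = Inr f \<and> last p = x}"

definition T_C :: "('v,'f,'a) csys \<Rightarrow> ('f \<times> 'v) set \<Rightarrow> ('v,'f) node set" where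
  "T_C S M = Vp S - T_I S M - T_O S M"

definition self_contained :: "('v,'f,'a) csys \<Rightarrow> ('v,'f) node set \<Rightarrow> 'f set \<Rightarrow> bool" where
  "self_contained S R Fs \<longleftrightarrow> Inr ` Fs \<subseteq> R \<and>
     card Fs = card (nbrs S R (Inr ` Fs)) \<and>
     (\<forall>G\<subseteq>Fs. card G \<le> card (nbrs S R (Inr ` G)))"

definition min_self_contained :: "('v,'f,'a) csys \<Rightarrow> ('v,'f) node set \<Rightarrow> 'f set \<Rightarrow> bool" where
  "min_self_contained S R Fs \<longleftrightarrow> Fs \<noteq> {} \<and> self_contained S R Fs \<and>
     \<not> (\<exists>G. G \<noteq> {} \<and> G \<subset> Fs \<and> self_contained S R G)"

definition clusterOf :: "('v,'f,'a) csys \<Rightarrow> ('v,'f) node set \<Rightarrow> 'f set \<Rightarrow> ('v,'f) node set" where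
  "clusterOf S R Fs = Inr ` Fs \<union> nbrs S R (Inr ` Fs)"

text \<open>A run of the clustering algorithm on B_C: the list of chosen minimal self-contained sets,
starting from the current vertex set R; the run must end with the null graph.\<close>
fun co_run :: "('v,'f,'a) csys \<Rightarrow> ('v,'f) node set \<Rightarrow> 'f set list \<Rightarrow> bool" where
  "co_run S R [] \<longleftrightarrow> R = {}"
| "co_run S R (Fs # rest) \<longleftrightarrow> min_self_contained S R Fs \<and> co_run S (R - clusterOf S R Fs) rest"

text \<open>Clusters produced by a run, each with the set of vertices v having an edge v -> C
(TC is the vertex set of B_C).\<close>
fun co_clusters :: "('v,'f,'a) csys \<Rightarrow> ('v,'f) node set \<Rightarrow> ('v,'f) node set \<Rightarrow> 'f set list
     \<Rightarrow> (('v,'f) node set \<times> ('v,'f) node set) list" where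
  "co_clusters S TC R [] = []"
| "co_clusters S TC R (Fs # rest) =
     (clusterOf S R Fs, nbrs S TC (Inr ` Fs) - nbrs S R (Inr ` Fs))
       # co_clusters S TC (R - clusterOf S R Fs) rest"

definition components :: "('v,'f,'a) csys \<Rightarrow> ('v,'f) node set \<Rightarrow> ('v,'f) node set set" where
  "components S T = (\<lambda>x. {y. (x, y) \<in> {(a, b). a \<in> T \<and> b \<in> T \<and> adjB S a b}\<^sup>*}) ` T"

definition CO_clusters :: "('v,'f,'a) csys \<Rightarrow> ('f \<times> 'v) set \<Rightarrow> 'f set list \<Rightarrow> ('v,'f) node set set" where
  "CO_clusters S M run =
     set (map fst (co_clusters S (T_C S M) (T_C S M) run)) \<union>
     components S (T_I S M) \<union> components S (T_O S M) \<union>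
     (\<lambda>w. {Inl w}) ` exo S"

definition CO_edges :: "('v,'f,'a) csys \<Rightarrow> ('f \<times> 'v) set \<Rightarrow> 'f set list \<Rightarrow> (('v,'f) node \<times> ('v,'f) node set) set" where
  "CO_edges S M run =
     {(z, C) | z C In. (C, In) \<in> set (co_clusters S (T_C S M) (T_C S M) run) \<and> z \<in> In} \<union>
     {(Inl v, C) | v f C. C \<in> CO_clusters S M run \<and> Inr f \<in> C \<and> adjB S (Inl v) (Inr f) \<and>
        ((Inl v \<in> T_O S M \<union> T_C S M \<and> Inr f \<in> T_I S M) \<or>
         (Inl v \<in> T_O S M \<and> Inr f \<in> T_C S M))} \<union>
     {(Inl w, C) | w f C. w \<in> exo S \<and> C \<in> CO_clusters S M run \<and> Inr f \<in> C \<and> adjB S (Inl w) (Inr f)}"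

definition dpath :: "('v,'f,'a) csys \<Rightarrow> ('f \<times> 'v) set \<Rightarrow> 'f set list \<Rightarrow> ('v,'f) node \<Rightarrow> ('v,'f) node \<Rightarrow> bool" where
  "dpath S M run x y \<longleftrightarrow>
     (\<exists>C\<in>CO_clusters S M run. \<exists>D\<in>CO_clusters S M run. x \<in> C \<and> y \<in> D \<and>
        (C, D) \<in> {(C1, C2). C1 \<in> CO_clusters S M run \<and> C2 \<in> CO_clusters S M run \<and>
                            (\<exists>z\<in>C1. (z, C2) \<in> CO_edges S M run)}\<^sup>*)"

definition max_uniquely_solvable :: "('v,'f,'a) csys \<Rightarrow> 'o measure \<Rightarrow> ('v \<Rightarrow> 'o \<Rightarrow> 'a)
     \<Rightarrow> ('f \<times> 'v) set \<Rightarrow> 'f set list \<Rightarrow> bool" where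
  "max_uniquely_solvable S P X M run \<longleftrightarrow>
     (\<forall>C\<in>CO_clusters S M run. C \<inter> Inl ` exo S = {} \<and> C \<inter> T_I S M = {} \<longrightarrow>
        uniquely_solvable S P X {f. Inr f \<in> C} {v. Inl v \<in> C}) \<and>
     solvable S P X {f. Inr f \<in> T_I S M} ({v. Inl v \<in> T_I S M} - exo S)"

end

theory Submission
  imports Defs
begin

lemma adjB_side: "adjB S a b \<Longrightarrow> isl a \<longleftrightarrow> \<not> isl b"
  by (auto simp: adjB_def)

lemma adjB_sym: "adjB S a b \<Longrightarrow> adjB S b a"
  by (auto simp: adjB_def)

lemma inM_sym: "inM M a b \<Longrightarrow> inM M b a"
  by (auto simp: inM_def)

lemma inM_unique:
  assumes "matching S M" "inM M a b" "inM M a c" shows "b = c"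
  using assms unfolding inM_def matching_def by fastforce

lemma inM_matched: "inM M a b \<Longrightarrow> matched M a"
  by (auto simp: inM_def matched_def)

lemma alt_parity:
  assumes "alt_path S M p" "i < length p"
  shows "isl (p!i) \<longleftrightarrow> (isl (p!0) \<longleftrightarrow> even i)"
  using assms(2)
proof (induction i)
  case 0 then show ?case by simp
next
  case (Suc i)
  then have "adjB S (p!i) (p!Suc i)" using assms(1) unfolding alt_path_def by blast
  then show ?case using Suc adjB_side[of S "p!i" "p!Suc i"] by auto
qed

lemma alt_prefix:
  assumes "alt_path S M p" "k < length p"
  shows "alt_path S M (take (Suc k) p)" "hd (take (Suc k) p) = hd p" "last (take (Suc k) p) = p!k"
proof -
  show "alt_path S M (take (Suc k) p)"
    using assms unfolding alt_path_def
    by (auto dest: in_set_takeD)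
  show "hd (take (Suc k) p) = hd p" using assms by (cases p) auto
  show "last (take (Suc k) p) = p!k" using assms by (simp add: take_Suc_conv_app_nth)
qed

lemma alt_extend:
  assumes "alt_path S M p" "b \<notin> set p" "b \<in> Vp S" "adjB S (last p) b"
    "inM M (last p) b \<longleftrightarrow> odd (length p - 1)"
  shows "alt_path S M (p @ [b])"
proof -
  have np: "p \<noteq> []" using assms(1) by (simp add: alt_path_def)
  have lp: "last p = p ! (length p - 1)" using np by (simp add: last_conv_nth)
  have A: "\<forall>i. Suc i < length (p @ [b]) \<longrightarrow> adjB S ((p @ [b]) ! i) ((p @ [b]) ! Suc i) \<and>
          (inM M ((p @ [b]) ! i) ((p @ [b]) ! Suc i) \<longleftrightarrow> odd i)"
  proof (intro allI impI)
    fix i assume i: "Suc i < length (p @ [b])"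
    show "adjB S ((p @ [b]) ! i) ((p @ [b]) ! Suc i) \<and>
          inM M ((p @ [b]) ! i) ((p @ [b]) ! Suc i) = odd i"
    proof (cases "Suc i < length p")
      case True then show ?thesis using assms(1) by (simp add: nth_append alt_path_def)
    next
      case False
      then have "i = length p - 1" using i by simp
      then show ?thesis using assms(4,5) np lp by (simp add: nth_append)
    qed
  qed
  have "distinct (p @ [b])" "set (p @ [b]) \<subseteq> Vp S" using assms(1,2,3) by (auto simp: alt_path_def)
  then show ?thesis using A unfolding alt_path_def by blast
qed

lemma alt_reach:
  assumes "matching S M" "alt_path S M p" "\<not> matched M (hd p)" "b \<in> Vp S"
    "adjB S (last p) b" "even (length p - 1)"
  shows "\<exists>p'. alt_path S M p' \<and> hd p' = hd p \<and> last p' = b"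
proof (cases "b \<in> set p")
  case True
  then obtain k where k: "k < length p" "p!k = b" by (auto simp: in_set_conv_nth)
  then show ?thesis using alt_prefix[OF assms(2) k(1)] by metis
next
  case False
  have np: "p \<noteq> []" using assms(2) by (simp add: alt_path_def)
  have "\<not> inM M (last p) b"
  proof
    assume im: "inM M (last p) b"
    show False
    proof (cases "length p = 1")
      case True
      then have "last p = hd p" using np by (cases p) auto
      then show False using im assms(3) inM_matched by metis
    next
      case False
      define j where "j = length p - 1"
      have lp0: "length p \<noteq> 0" using np by simp
      have j: "j \<ge> 1" "j < length p" using False lp0 unfolding j_def by linarith+
      have sj: "Suc (j-1) = j" using j by simp
      have ej: "even j" using assms(6) unfolding j_def .
      have oj: "odd (j-1)" using ej j(1) by (cases j) auto
      have "inM M (p!(j-1)) (p!Suc (j-1))" using assms(2) j oj sj unfolding alt_path_def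
        by (metis)
      then have "inM M (p!j) (p!(j-1))" using j by (simp add: inM_sym)
      moreover have "last p = p!j" using np by (simp add: last_conv_nth j_def)
      ultimately have "b = p!(j-1)" using im inM_unique[OF assms(1)] by metis
      then show False using \<open>b \<notin> set p\<close> j by simp
    qed
  qed
  then have "alt_path S M (p @ [b])" using alt_extend[OF assms(2) False assms(4,5)] assms(6) by simp
  then show ?thesis using np by auto
qed

lemma inM_lr: "inM M (Inl a) (Inr b) \<longleftrightarrow> (b, a) \<in> M" "inM M (Inr b) (Inl a) \<longleftrightarrow> (b, a) \<in> M"
  by (auto simp: inM_def)

lemma card_even_odd:
  fixes k :: nat
  shows "card {i. Suc i < Suc (Suc (2*k+1)) - 1 \<and> even i} = Suc k"
    "card {i. Suc i < Suc (Suc (2*k+1)) - 1 \<and> odd i} = k"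
proof -
  have "{i. Suc i < Suc (Suc (2*k+1)) - 1 \<and> even i} = (\<lambda>j. 2*j) ` {..k}"
    by (auto elim!: evenE simp: image_iff)
  moreover have "inj_on (\<lambda>j::nat. 2*j) {..k}" by (auto simp: inj_on_def)
  ultimately show "card {i. Suc i < Suc (Suc (2*k+1)) - 1 \<and> even i} = Suc k"
    by (simp add: card_image)
  have "{i. Suc i < Suc (Suc (2*k+1)) - 1 \<and> odd i} = (\<lambda>j. 2*j+1) ` {..<k}"
    by (auto elim!: oddE simp: image_iff)
  moreover have "inj_on (\<lambda>j::nat. 2*j+1) {..<k}" by (auto simp: inj_on_def)
  ultimately show "card {i. Suc i < Suc (Suc (2*k+1)) - 1 \<and> odd i} = k"
    by (simp add: card_image)
qed

lemma no_aug:
  assumes mm: "max_matching S M" and fin: "finite (cons S)" "finite (vars S)"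
    and ap: "alt_path S M q" and h: "hd q = Inl u0" "\<not> matched M (Inl u0)"
    and l: "last q = Inr f0" "\<not> matched M (Inr f0)"
  shows False
proof -
  have mat: "matching S M" using mm by (simp add: max_matching_def)
  have nq: "q \<noteq> []" and dq: "distinct q" and sq: "set q \<subseteq> Vp S"
    and stp: "\<And>i. Suc i < length q \<Longrightarrow> adjB S (q!i) (q!Suc i) \<and> (inM M (q!i) (q!Suc i) \<longleftrightarrow> odd i)"
    using ap by (auto simp: alt_path_def)
  define n where "n = length q"
  have q0: "q!0 = Inl u0" using h nq by (simp add: hd_conv_nth)
  have qn: "q!(n-1) = Inr f0" using l nq by (simp add: last_conv_nth n_def)
  have n0: "n > 0" using nq by (simp add: n_def)
  have side: "\<And>i. i < n \<Longrightarrow> isl (q!i) \<longleftrightarrow> even i"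
    using alt_parity[OF ap] q0 by (simp add: n_def)
  have "odd (n-1)" using side[of "n-1"] qn n0 by simp
  then obtain k where k: "n - 1 = 2*k+1" by (rule oddE)
  then have nk: "n = Suc (Suc (2*k+1)) - 1" by simp
  define e where "e i = (case q!i of Inl v \<Rightarrow> (projr (q!Suc i), v) | Inr f \<Rightarrow> (f, projl (q!Suc i)))" for i
  have eshape: "(even i \<longrightarrow> q!i = Inl (snd (e i)) \<and> q!Suc i = Inr (fst (e i))) \<and>
                (odd i \<longrightarrow> q!i = Inr (fst (e i)) \<and> q!Suc i = Inl (snd (e i)))" if "Suc i < n" for i
  proof -
    have "isl (q!i) \<longleftrightarrow> even i" "isl (q!Suc i) \<longleftrightarrow> odd i" using side that by auto
    then show ?thesis unfolding e_def
      by (cases "q!i"; cases "q!Suc i") auto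
  qed
  have einM: "e i \<in> M \<longleftrightarrow> odd i" if "Suc i < n" for i
  proof -
    have "inM M (q!i) (q!Suc i) \<longleftrightarrow> odd i" using stp that by (simp add: n_def)
    moreover have "inM M (q!i) (q!Suc i) \<longleftrightarrow> e i \<in> M"
      using eshape[OF that] by (cases "even i") (auto simp: inM_lr)
    ultimately show ?thesis by simp
  qed
  have qinj: "q!a = q!b \<Longrightarrow> a < n \<Longrightarrow> b < n \<Longrightarrow> a = b" for a b
    using dq by (simp add: nth_eq_iff_index_eq n_def)
  have einj: "inj_on e {i. Suc i < n}"
  proof (rule inj_onI)
    fix a b assume a: "a \<in> {i. Suc i < n}" and b: "b \<in> {i. Suc i < n}" and eq: "e a = e b"
    have A: "{q!a, q!Suc a} = {Inl (snd (e a)), Inr (fst (e a))}"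
      using eshape[of a] a by (cases "even a") auto
    have B: "{q!b, q!Suc b} = {Inl (snd (e b)), Inr (fst (e b))}"
      using eshape[of b] b by (cases "even b") auto
    have "q!a \<in> {q!b, q!Suc b}" "q!Suc a \<in> {q!b, q!Suc b}" using A B eq by auto
    then have "(a = b \<or> a = Suc b) \<and> (Suc a = b \<or> Suc a = Suc b)"
      using qinj a b by auto
    then show "a = b" by auto
  qed
  define N where "N = e ` {i. Suc i < n \<and> even i}"
  define R where "R = e ` {i. Suc i < n \<and> odd i}"
  have RM: "R \<subseteq> M" using einM by (auto simp: R_def)
  have NM: "N \<inter> M = {}" using einM by (auto simp: N_def)
  have key1: "(f, v) \<in> R" if fv: "(f, v) \<in> M" and kn: "k' < n" and qk: "q!k' = Inr f" for f v k'
  proof -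
    have ok: "odd k'" using side[OF kn] qk by simp
    show ?thesis
    proof (cases "k' = n - 1")
      case True
      then have "f = f0" using qk qn by simp
      then show ?thesis using l(2) fv by (auto simp: matched_def)
    next
      case False
      then have sk: "Suc k' < n" using kn by simp
      have "e k' \<in> M" using einM[OF sk] ok by simp
      moreover have "fst (e k') = f" using eshape[OF sk] ok qk by simp
      ultimately have "e k' = (f, v)" using fv mat unfolding matching_def
        by (metis (mono_tags, lifting) case_prodD prod.collapse)
      moreover have "e k' \<in> R" using sk ok unfolding R_def by blast
      ultimately show ?thesis by simp
    qed
  qed
  have key2: "(f, v) \<in> R" if fv: "(f, v) \<in> M" and kn: "k' < n" and qk: "q!k' = Inl v" for f v k'
  proof -
    have ok: "even k'" using side[OF kn] qk by simp
    show ?thesis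
    proof (cases "k' = 0")
      case True
      then have "v = u0" using qk q0 by simp
      then show ?thesis using h(2) fv by (auto simp: matched_def)
    next
      case False
      then obtain k'' where k'': "k' = Suc k''" by (cases k') auto
      then have sk: "Suc k'' < n" using kn by simp
      have ok': "odd k''" using ok k'' by simp
      have "e k'' \<in> M" using einM[OF sk] ok' by simp
      moreover have "snd (e k'') = v" using eshape[OF sk] ok' qk k'' by simp
      ultimately have "e k'' = (f, v)" using fv mat unfolding matching_def
        by (metis (mono_tags, lifting) case_prodD prod.collapse)
      moreover have "e k'' \<in> R" using sk ok' unfolding R_def by blast
      ultimately show ?thesis by simp
    qed
  qed
  have oldnew: "fst x \<noteq> fst y \<and> snd x \<noteq> snd y" if x: "x \<in> M - R" and y: "y \<in> N" for x y
  proof -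
    obtain i where i: "Suc i < n" "even i" "y = e i" using y by (auto simp: N_def)
    have "q!i = Inl (snd y)" "q!Suc i = Inr (fst y)" using eshape[OF i(1)] i by auto
    then show ?thesis using key1[of "fst x" "snd x" "Suc i"] key2[of "fst x" "snd x" i] x i(1) by auto
  qed
  have newnew: "fst x = fst y \<longleftrightarrow> snd x = snd y" if x: "x \<in> N" and y: "y \<in> N" for x y
  proof -
    obtain i where i: "Suc i < n" "even i" "x = e i" using x by (auto simp: N_def)
    obtain j where j: "Suc j < n" "even j" "y = e j" using y by (auto simp: N_def)
    have "q!i = Inl (snd x)" "q!Suc i = Inr (fst x)" using eshape[OF i(1)] i by auto
    moreover have "q!j = Inl (snd y)" "q!Suc j = Inr (fst y)" using eshape[OF j(1)] j by auto
    ultimately show ?thesis using qinj[of i j] qinj[of "Suc i" "Suc j"] i j by auto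
  qed
  define M' where "M' = (M - R) \<union> N"
  have Nvalid: "N \<subseteq> {(f, v). f \<in> cons S \<and> v \<in> vars S - exo S \<and> v \<in> scope S f}"
  proof
    fix y assume y: "y \<in> N"
    obtain i where i: "Suc i < n" "even i" "y = e i" using y by (auto simp: N_def)
    have qi: "q!i = Inl (snd y)" "q!Suc i = Inr (fst y)" using eshape[OF i(1)] i by auto
    have "adjB S (q!i) (q!Suc i)" using stp i(1) by (simp add: n_def)
    moreover have "q!i \<in> Vp S" using sq i(1) by (simp add: n_def subset_iff)
    ultimately show "y \<in> {(f, v). f \<in> cons S \<and> v \<in> vars S - exo S \<and> v \<in> scope S f}"
      using qi by (cases y) (auto simp: adjB_def Vp_def)
  qed
  have matM': "matching S M'"
    unfolding matching_def
  proof (intro conjI)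
    show "M' \<subseteq> {(f, v). f \<in> cons S \<and> v \<in> vars S - exo S \<and> v \<in> scope S f}"
      using mat Nvalid by (auto simp: M'_def matching_def)
    have mM: "fst x = fst y \<longleftrightarrow> snd x = snd y" if "x \<in> M" "y \<in> M" for x y
      using mat that unfolding matching_def by (cases x; cases y) fastforce
    have H: "fst x = fst y \<longleftrightarrow> snd x = snd y" if x: "x \<in> M'" and y: "y \<in> M'" for x y
    proof -
      have xy: "x \<in> M - R \<or> x \<in> N" "y \<in> M - R \<or> y \<in> N" using x y unfolding M'_def by auto
      have o1: "x \<in> M - R \<Longrightarrow> y \<in> N \<Longrightarrow> fst x \<noteq> fst y \<and> snd x \<noteq> snd y" using oldnew by blast
      have o2: "y \<in> M - R \<Longrightarrow> x \<in> N \<Longrightarrow> fst x \<noteq> fst y \<and> snd x \<noteq> snd y" using oldnew[of y x] by auto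
      have m: "x \<in> M - R \<Longrightarrow> y \<in> M - R \<Longrightarrow> fst x = fst y \<longleftrightarrow> snd x = snd y" using mM[of x y] by simp
      have n: "x \<in> N \<Longrightarrow> y \<in> N \<Longrightarrow> fst x = fst y \<longleftrightarrow> snd x = snd y" using newnew[of x y] by simp
      show ?thesis using xy o1 o2 m n by argo
    qed
    have H2: "(f = f') = (v = v')" if "(f, v) \<in> M'" "(f', v') \<in> M'" for f v f' v'
      using H[OF that] by simp
    show "\<forall>(f, v)\<in>M'. \<forall>(f', v')\<in>M'. (f = f') = (v = v')"
      using H2 by auto
  qed
  have finM: "finite M"
  proof (rule finite_subset)
    show "M \<subseteq> cons S \<times> vars S" using mat by (auto simp: matching_def)
  qed (use fin in auto)
  have cN: "card N = Suc k"
    using card_even_odd(1)[of k] einj unfolding N_def nk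
    by (subst card_image) (auto intro: inj_on_subset)
  have cR: "card R = k"
    using card_even_odd(2)[of k] einj unfolding R_def nk
    by (subst card_image) (auto intro: inj_on_subset)
  have finR: "finite R" using finM RM finite_subset by blast
  have "finite {i. Suc i < n \<and> even i}" by (rule finite_subset[of _ "{..<n}"]) auto
  then have finN: "finite N" unfolding N_def by simp
  have "card M' = card (M - R) + card N"
    unfolding M'_def using NM finM finN by (subst card_Un_disjoint) auto
  also have "card (M - R) = card M - card R" using RM finR by (simp add: card_Diff_subset)
  finally have "card M' = card M + 1"
    using cN cR card_mono[OF finM RM] by simp
  moreover have "card M' \<le> card M" using mm matM' by (simp add: max_matching_def)
  ultimately show False by simp
qed

lemma alt_last_parity:
  assumes "alt_path S M p"
  shows "isl (last p) \<longleftrightarrow> (isl (hd p) \<longleftrightarrow> even (length p - 1))"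
proof -
  have np: "p \<noteq> []" using assms by (simp add: alt_path_def)
  then show ?thesis using alt_parity[OF assms, of "length p - 1"]
    by (simp add: last_conv_nth hd_conv_nth)
qed

lemma alt_last_Vp: "alt_path S M p \<Longrightarrow> last p \<in> Vp S"
  unfolding alt_path_def by auto

lemma TO_closed:
  assumes mat: "matching S M" and fo: "Inr f \<in> T_O S M" and u: "u \<in> vars S - exo S" "u \<in> scope S f"
  shows "Inl u \<in> T_O S M"
proof -
  obtain p f0 where p: "alt_path S M p" "f0 \<in> cons S" "\<not> matched M (Inr f0)" "hd p = Inr f0" "last p = Inr f"
    using fo unfolding T_O_def by blast
  have "f \<in> cons S" using alt_last_Vp[OF p(1)] p(5) by (auto simp: Vp_def)
  then have adj: "adjB S (last p) (Inl u)" using u p(5) by (auto simp: adjB_def)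
  have ev: "even (length p - 1)" using alt_last_parity[OF p(1)] p(4,5) by simp
  have "Inl u \<in> Vp S" using u by (simp add: Vp_def)
  then obtain p' where "alt_path S M p'" "hd p' = hd p" "last p' = Inl u"
    using alt_reach[OF mat p(1) _ _ adj ev] p(3,4) by metis
  then have "alt_path S M p' \<and> f0 \<in> cons S \<and> \<not> matched M (Inr f0) \<and> hd p' = Inr f0 \<and> last p' = Inl u"
    using p(2,3,4) by simp
  then show ?thesis unfolding T_O_def by blast
qed

lemma TI_closed:
  assumes mat: "matching S M" and fo: "Inl u \<in> T_I S M" and f: "f \<in> cons S" "u \<in> scope S f"
  shows "Inr f \<in> T_I S M"
proof -
  obtain p u0 where p: "alt_path S M p" "u0 \<in> vars S - exo S" "\<not> matched M (Inl u0)" "hd p = Inl u0" "last p = Inl u"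
    using fo unfolding T_I_def by blast
  have "u \<in> vars S" using alt_last_Vp[OF p(1)] p(5) by (auto simp: Vp_def)
  then have adj: "adjB S (last p) (Inr f)" using f p(5) by (auto simp: adjB_def)
  have ev: "even (length p - 1)" using alt_last_parity[OF p(1)] p(4,5) by simp
  have "Inr f \<in> Vp S" using f by (simp add: Vp_def)
  then obtain p' where "alt_path S M p'" "hd p' = hd p" "last p' = Inr f"
    using alt_reach[OF mat p(1) _ _ adj ev] p(3,4) by metis
  then have "alt_path S M p' \<and> u0 \<in> vars S - exo S \<and> \<not> matched M (Inl u0) \<and> hd p' = Inl u0 \<and> last p' = Inr f"
    using p(2,3,4) by simp
  then show ?thesis unfolding T_I_def by blast
qed

lemma TI_TO_disj:
  assumes mm: "max_matching S M" and fin: "finite (cons S)" "finite (vars S)"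
  shows "T_I S M \<inter> T_O S M = {}"
proof (rule ccontr)
  assume "T_I S M \<inter> T_O S M \<noteq> {}"
  then obtain x where "x \<in> T_I S M" "x \<in> T_O S M" by blast
  then obtain p1 u0 p2 f0 where p1: "alt_path S M p1" "u0 \<in> vars S - exo S" "\<not> matched M (Inl u0)"
      "hd p1 = Inl u0" "last p1 = x"
    and p2: "alt_path S M p2" "f0 \<in> cons S" "\<not> matched M (Inr f0)" "hd p2 = Inr f0" "last p2 = x"
    unfolding T_I_def T_O_def by blast
  have n1: "p1 \<noteq> []" and d1: "distinct p1" and s1: "set p1 \<subseteq> Vp S"
    and st1: "\<And>i. Suc i < length p1 \<Longrightarrow> adjB S (p1!i) (p1!Suc i) \<and> (inM M (p1!i) (p1!Suc i) \<longleftrightarrow> odd i)"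
    using p1(1) by (auto simp: alt_path_def)
  have n2: "p2 \<noteq> []" and d2: "distinct p2" and s2: "set p2 \<subseteq> Vp S"
    and st2: "\<And>i. Suc i < length p2 \<Longrightarrow> adjB S (p2!i) (p2!Suc i) \<and> (inM M (p2!i) (p2!Suc i) \<longleftrightarrow> odd i)"
    using p2(1) by (auto simp: alt_path_def)
  have h1: "p1!0 = Inl u0" using p1(4) n1 by (simp add: hd_conv_nth)
  have h2: "p2!0 = Inr f0" using p2(4) n2 by (simp add: hd_conv_nth)
  define Pr where "Pr i \<longleftrightarrow> i < length p1 \<and> p1!i \<in> set p2" for i
  have "last p1 \<in> set p2" using p1(5) p2(5) n2 by (metis last_in_set)
  then have ex: "Pr (length p1 - 1)" using n1 by (simp add: Pr_def last_conv_nth)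
  define i where "i = (LEAST i. Pr i)"
  have Pri: "Pr i" unfolding i_def using ex by (rule LeastI)
  have mini: "\<And>k. k < i \<Longrightarrow> p1!k \<notin> set p2"
    using not_less_Least[where P = Pr] Pri unfolding i_def Pr_def
    by (metis (no_types, lifting) order.strict_trans)
  have il: "i < length p1" using Pri by (simp add: Pr_def)
  obtain j where jl: "j < length p2" and ji: "p2!j = p1!i" using Pri by (auto simp: Pr_def in_set_conv_nth)
  have par1: "isl (p1!i) \<longleftrightarrow> even i" using alt_parity[OF p1(1) il] h1 by simp
  have par2: "isl (p2!j) \<longleftrightarrow> odd j" using alt_parity[OF p2(1) jl] h2 by simp
  have oij: "odd (i + j)" using par1 par2 ji by auto
  define q where "q = map (\<lambda>k. if k \<le> i then p1!k else p2!(i+j-k)) [0..<i+j+1]"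
  have lq: "length q = i+j+1" by (simp add: q_def)
  have qnth: "q!k = (if k \<le> i then p1!k else p2!(i+j-k))" if "k < i+j+1" for k
    using that by (simp add: q_def del: upt_Suc)
  have qnth2: "q!k = p2!(i+j-k)" if "k < i+j+1" "i \<le> k" for k
    using that qnth ji by (cases "k = i") auto
  have qd: "distinct q"
    unfolding distinct_conv_nth lq
  proof (intro allI impI)
    fix a b assume a: "a < i+j+1" and b: "b < i+j+1" and ab: "a \<noteq> b"
    have c1: "p1!a' \<noteq> p2!(i+j-b')" if "a' \<le> i" "i < b'" "b' < i+j+1" for a' b'
    proof (cases "a' = i")
      case True
      have "i+j-b' \<noteq> j" "i+j-b' < length p2" using that jl by auto
      then show ?thesis using True ji d2 jl by (metis nth_eq_iff_index_eq)
    next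
      case False
      then have "a' < i" using that by simp
      moreover have "i+j-b' < length p2" using that jl by auto
      ultimately show ?thesis using mini[of a'] by auto
    qed
    show "q!a \<noteq> q!b"
    proof (cases "a \<le> i")
      case True
      show ?thesis
      proof (cases "b \<le> i")
        case True
        then show ?thesis using \<open>a \<le> i\<close> qnth a b ab d1 il by (simp add: nth_eq_iff_index_eq)
      next
        case False
        then show ?thesis using \<open>a \<le> i\<close> qnth a b c1[of a b] by simp
      qed
    next
      case False
      show ?thesis
      proof (cases "b \<le> i")
        case True
        then show ?thesis using \<open>\<not> a \<le> i\<close> qnth a b c1[of b a] by (simp add: eq_commute)
      next
        case False
        then show ?thesis using \<open>\<not> a \<le> i\<close> qnth a b ab d2 jl by (simp add: nth_eq_iff_index_eq)
      qed
    qed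
  qed
  have qs: "set q \<subseteq> Vp S"
  proof
    fix y assume "y \<in> set q"
    then obtain k where k: "k < i+j+1" "y = q!k" using lq by (auto simp: in_set_conv_nth)
    show "y \<in> Vp S"
    proof (cases "k \<le> i")
      case True then show ?thesis using k qnth s1 il by (auto simp: subset_iff)
    next
      case False then show ?thesis using k qnth s2 jl by (auto simp: subset_iff)
    qed
  qed
  have qst: "adjB S (q!k) (q!Suc k) \<and> (inM M (q!k) (q!Suc k) \<longleftrightarrow> odd k)" if k: "Suc k < length q" for k
  proof (cases "Suc k \<le> i")
    case True
    then show ?thesis using qnth k lq st1[of k] il by simp
  next
    case False
    define m where "m = i + j - Suc k"
    have m: "Suc m < length p2" "Suc m = i + j - k" using False k lq jl unfolding m_def by auto
    have "q!k = p2!(Suc m)" "q!Suc k = p2!m" using qnth2 k lq False m(2) unfolding m_def by auto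
    moreover have "odd m \<longleftrightarrow> odd k"
    proof -
      have mk: "Suc (m + k) = i + j" using m(2) k lq by simp
      have "even (m + k)" using oij by (simp add: mk[symmetric])
      then show ?thesis by simp
    qed
    ultimately show ?thesis using st2[OF m(1)] by (auto intro: adjB_sym inM_sym)
  qed
  have aq: "alt_path S M q"
    unfolding alt_path_def using qd qs qst lq by auto
  have "q \<noteq> []" using lq by (cases q) auto
  then have hq: "hd q = Inl u0" using qnth[of 0] h1 by (simp add: hd_conv_nth)
  have lastq: "last q = Inr f0"
  proof -
    have "last q = q!(i+j)" using lq \<open>q \<noteq> []\<close> by (simp add: last_conv_nth)
    also have "\<dots> = p2!0" using qnth2[of "i+j"] by simp
    finally show ?thesis using h2 by simp
  qed
  show False using no_aug[OF mm fin aq hq p1(3) lastq p2(3)] .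
qed

lemma solvec_do: "solvec (do_sys S SF \<sigma> \<xi>) = solvec S"
  by (simp add: do_sys_def solvec_def fun_eq_iff)

lemma sol_point:
  assumes wf: "wf_csys S P X"
    and h: "h \<in> PiM (exo S) (xsp S) \<rightarrow>\<^sub>M PiM (vars S - exo S) (xsp S)"
    and om: "\<omega> \<in> space P" and A: "A \<subseteq> vars S"
  shows "restrict (solvec S X h \<omega>) (A - exo S) \<in> space (PiM (A - exo S) (xsp S))"
    and "\<And>u. u \<in> A \<Longrightarrow> mergeX S X \<omega> (restrict (solvec S X h \<omega>) (A - exo S)) u = solvec S X h \<omega> u"
proof -
  have Xm: "\<And>w. w \<in> exo S \<Longrightarrow> X w \<in> P \<rightarrow>\<^sub>M xsp S w" using wf by (simp add: wf_csys_def)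
  have "(\<lambda>w\<in>exo S. X w \<omega>) \<in> space (PiM (exo S) (xsp S))"
    using Xm om by (auto simp: space_PiM intro: measurable_space)
  then have "h (\<lambda>w\<in>exo S. X w \<omega>) \<in> space (PiM (vars S - exo S) (xsp S))"
    by (rule measurable_space[OF h])
  then have hs: "\<And>u. u \<in> vars S - exo S \<Longrightarrow> h (\<lambda>w\<in>exo S. X w \<omega>) u \<in> space (xsp S u)"
    by (auto simp: space_PiM)
  show "restrict (solvec S X h \<omega>) (A - exo S) \<in> space (PiM (A - exo S) (xsp S))"
  proof -
    have "\<forall>u\<in>A - exo S. solvec S X h \<omega> u \<in> space (xsp S u)"
      using hs A by (auto simp: solvec_def)
    then show ?thesis by (simp add: space_PiM restrict_PiE_iff)
  qed
  show "\<And>u. u \<in> A \<Longrightarrow> mergeX S X \<omega> (restrict (solvec S X h \<omega>) (A - exo S)) u = solvec S X h \<omega> u"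
    using A by (auto simp: mergeX_def solvec_def)
qed

lemma core:
  assumes wf: "wf_csys S P X"
    and sol: "is_solution S P X g"
    and sol': "is_solution (do_sys S SF \<sigma> \<xi>) P X g'"
    and us: "uniquely_solvable S P X Fs Vs"
    and Fs: "Fs \<subseteq> cons S" "Fs \<inter> SF = {}" and Vs: "Vs \<subseteq> vars S - exo S"
  shows "AE \<omega> in P. (\<forall>u\<in>VS S Fs - Vs. solvec S X g \<omega> u = solvec S X g' \<omega> u) \<longrightarrow>
                    (\<forall>u\<in>Vs. solvec S X g \<omega> u = solvec S X g' \<omega> u)"
proof -
  obtain gC where gC: "AE \<omega> in P. \<forall>x\<in>space (PiM ((VS S Fs \<union> Vs) - exo S) (xsp S)).
        fst (solv_cond S X Fs Vs gC \<omega> x) \<longleftrightarrow> snd (solv_cond S X Fs Vs gC \<omega> x)"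
    using us unfolding uniquely_solvable_def by blast
  have gm: "g \<in> PiM (exo S) (xsp S) \<rightarrow>\<^sub>M PiM (vars S - exo S) (xsp S)"
    and c1: "AE \<omega> in P. \<forall>f\<in>cons S. phi S f (restrict (solvec S X g \<omega>) (scope S f)) = cst S f"
    using sol by (auto simp: is_solution_def)
  have g'm: "g' \<in> PiM (exo S) (xsp S) \<rightarrow>\<^sub>M PiM (vars S - exo S) (xsp S)"
    and c2': "AE \<omega> in P. \<forall>f\<in>cons S. phi (do_sys S SF \<sigma> \<xi>) f (restrict (solvec S X g' \<omega>) (scope (do_sys S SF \<sigma> \<xi>) f)) = cst (do_sys S SF \<sigma> \<xi>) f"
    using sol' by (auto simp: is_solution_def solvec_do, auto simp: do_sys_def)
  have c2: "AE \<omega> in P. \<forall>f\<in>Fs. phi S f (restrict (solvec S X g' \<omega>) (scope S f)) = cst S f"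
    using c2'
  proof eventually_elim
    case (elim \<omega>)
    show ?case
    proof
      fix f assume f: "f \<in> Fs"
      then have fc: "f \<in> cons S" and fn: "f \<notin> SF" using Fs by auto
      show "phi S f (restrict (solvec S X g' \<omega>) (scope S f)) = cst S f"
        using bspec[OF elim fc] fn by (simp add: do_sys_def)
    qed
  qed
  have VSv: "VS S Fs \<subseteq> vars S" using wf Fs by (auto simp: wf_csys_def VS_def)
  define A where "A = VS S Fs \<union> Vs"
  have A: "A \<subseteq> vars S" using VSv Vs by (auto simp: A_def)
  show ?thesis
    using gC c1 c2 AE_space
  proof eventually_elim
    case (elim \<omega>)
    define x1 where "x1 = restrict (solvec S X g \<omega>) (A - exo S)"
    define x2 where "x2 = restrict (solvec S X g' \<omega>) (A - exo S)"
    have x1s: "x1 \<in> space (PiM ((VS S Fs \<union> Vs) - exo S) (xsp S))"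
      and m1: "\<And>u. u \<in> A \<Longrightarrow> mergeX S X \<omega> x1 u = solvec S X g \<omega> u"
      using sol_point[OF wf gm elim(4) A] unfolding x1_def A_def by auto
    have x2s: "x2 \<in> space (PiM ((VS S Fs \<union> Vs) - exo S) (xsp S))"
      and m2: "\<And>u. u \<in> A \<Longrightarrow> mergeX S X \<omega> x2 u = solvec S X g' \<omega> u"
      using sol_point[OF wf g'm elim(4) A] unfolding x2_def A_def by auto
    have sc: "\<And>f. f \<in> Fs \<Longrightarrow> scope S f \<subseteq> A" by (auto simp: A_def VS_def)
    have "snd (solv_cond S X Fs Vs gC \<omega> x1)"
    proof -
      have "\<And>f. f \<in> Fs \<Longrightarrow> restrict (mergeX S X \<omega> x1) (scope S f) = restrict (solvec S X g \<omega>) (scope S f)"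
        using m1 sc by (auto simp: restrict_def fun_eq_iff)
      then show ?thesis using elim(2) Fs by (auto simp: solv_cond_def)
    qed
    then have e1: "restrict x1 Vs = gC (restrict (mergeX S X \<omega> x1) (VS S Fs - Vs))"
      using elim(1) x1s by (auto simp: solv_cond_def)
    have "snd (solv_cond S X Fs Vs gC \<omega> x2)"
    proof -
      have "\<And>f. f \<in> Fs \<Longrightarrow> restrict (mergeX S X \<omega> x2) (scope S f) = restrict (solvec S X g' \<omega>) (scope S f)"
        using m2 sc by (auto simp: restrict_def fun_eq_iff)
      then show ?thesis using elim(3) by (auto simp: solv_cond_def)
    qed
    then have e2: "restrict x2 Vs = gC (restrict (mergeX S X \<omega> x2) (VS S Fs - Vs))"
      using elim(1) x2s by (auto simp: solv_cond_def)
    show ?case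
    proof
      assume inp: "\<forall>u\<in>VS S Fs - Vs. solvec S X g \<omega> u = solvec S X g' \<omega> u"
      have "restrict (mergeX S X \<omega> x1) (VS S Fs - Vs) = restrict (mergeX S X \<omega> x2) (VS S Fs - Vs)"
        using inp m1 m2 by (auto simp: restrict_def fun_eq_iff A_def)
      then have "restrict x1 Vs = restrict x2 Vs" using e1 e2 by simp
      then show "\<forall>u\<in>Vs. solvec S X g \<omega> u = solvec S X g' \<omega> u"
        using Vs by (auto simp: x1_def x2_def A_def restrict_def fun_eq_iff split: if_splits)
    qed
  qed
qed

lemma clusterOf_sub: "min_self_contained S R Fs \<Longrightarrow> clusterOf S R Fs \<subseteq> R"
  by (auto simp: min_self_contained_def self_contained_def clusterOf_def nbrs_def)

lemma run_sub: "co_run S R rs \<Longrightarrow> (A, In) \<in> set (co_clusters S TC R rs) \<Longrightarrow> A \<subseteq> R"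
proof (induction rs arbitrary: R)
  case Nil then show ?case by simp
next
  case (Cons Fs rest)
  then show ?case using clusterOf_sub by fastforce
qed

lemma run_disj: "co_run S R rs \<Longrightarrow> A \<in> fst ` set (co_clusters S TC R rs) \<Longrightarrow>
   B \<in> fst ` set (co_clusters S TC R rs) \<Longrightarrow> z \<in> A \<Longrightarrow> z \<in> B \<Longrightarrow> A = B"
proof (induction rs arbitrary: R)
  case Nil then show ?case by simp
next
  case (Cons Fs rest)
  define C where "C = clusterOf S R Fs"
  have r: "co_run S (R - C) rest" using Cons.prems(1) by (simp add: C_def)
  have sub: "\<And>A'. A' \<in> fst ` set (co_clusters S TC (R - C) rest) \<Longrightarrow> A' \<subseteq> R - C"
    using run_sub[OF r] by force
  have AB: "A = C \<or> A \<in> fst ` set (co_clusters S TC (R - C) rest)"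
    "B = C \<or> B \<in> fst ` set (co_clusters S TC (R - C) rest)"
    using Cons.prems(2,3) by (auto simp: C_def)
  then show ?case using Cons.IH[OF r] Cons.prems(4,5) sub by blast
qed

lemma nbrs_Inl: "b \<in> nbrs S R (Inr ` Fs) \<Longrightarrow> isl b"
  by (auto simp: nbrs_def adjB_def)

lemma dpath_step:
  assumes "dpath S M run x z" "(z, C) \<in> CO_edges S M run" "C \<in> CO_clusters S M run" "y \<in> C"
  shows "dpath S M run x y"
proof -
  let ?Rl = "{(C1, C2). C1 \<in> CO_clusters S M run \<and> C2 \<in> CO_clusters S M run \<and>
                            (\<exists>z\<in>C1. (z, C2) \<in> CO_edges S M run)}"
  obtain C1 D where c: "C1 \<in> CO_clusters S M run" "D \<in> CO_clusters S M run" "x \<in> C1" "z \<in> D"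
    "(C1, D) \<in> ?Rl\<^sup>*" using assms(1) unfolding dpath_def by blast
  have "D \<in> CO_clusters S M run \<and> C \<in> CO_clusters S M run \<and> (\<exists>z\<in>D. (z, C) \<in> CO_edges S M run)"
    using c(2,4) assms(2,3) by blast
  then have dc: "(D, C) \<in> ?Rl" by simp
  have "(C1, C) \<in> ?Rl\<^sup>*" using rtrancl.rtrancl_into_rtrancl[OF c(5) dc] .
  then show ?thesis unfolding dpath_def using c(1,3) assms(3,4) by blast
qed

lemma dpath_same:
  assumes "C \<in> CO_clusters S M run" "x \<in> C" "y \<in> C"
  shows "dpath S M run x y"
  unfolding dpath_def using assms by blast

lemma comp_sub:
  assumes "K \<in> components S T" shows "K \<subseteq> T"
proof
  fix y assume y: "y \<in> K"
  obtain z where z: "z \<in> T" "K = {y. (z, y) \<in> {(a, b). a \<in> T \<and> b \<in> T \<and> adjB S a b}\<^sup>*}"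
    using assms by (auto simp: components_def)
  have "(z, y) \<in> {(a, b). a \<in> T \<and> b \<in> T \<and> adjB S a b}\<^sup>*" using y z by simp
  then show "y \<in> T" using z(1) by (induction rule: rtrancl_induct) auto
qed

theorem theorem23:
  fixes S :: "('v, 'f, 'a) csys" and P :: "'o measure" and X :: "'v \<Rightarrow> 'o \<Rightarrow> 'a"
    and M :: "('f \<times> 'v) set" and run :: "'f set list"
    and g g' :: "('v \<Rightarrow> 'a) \<Rightarrow> ('v \<Rightarrow> 'a)"
    and SF :: "'f set" and SV :: "'v set" and \<sigma> :: "'f \<Rightarrow> 'v" and \<xi> :: "'v \<Rightarrow> 'a" and v :: 'v
  assumes wf: "wf_csys S P X"
    and mm: "max_matching S M"
    and run: "co_run S (T_C S M) run"
    and mus: "max_uniquely_solvable S P X M run"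
    and sol: "is_solution S P X g"
    and SF: "SF \<subseteq> {f \<in> cons S. Inr f \<in> T_C S M \<union> T_O S M}"
    and SV: "SV \<subseteq> {u \<in> vars S - exo S. Inl u \<in> T_C S M \<union> T_O S M}"
    and cl: "Inr ` SF \<union> Inl ` SV \<in> CO_clusters S M run"
    and enum: "bij_betw \<sigma> SF SV"
    and xi: "\<forall>u\<in>SV. \<xi> u \<in> space (xsp S u)"
    and sol': "is_solution (do_sys S SF \<sigma> \<xi>) P X g'"
    and v: "v \<in> vars S" "Inl v \<in> T_C S M \<union> T_O S M"
    and nopath: "\<forall>x\<in>SV. \<not> dpath S M run (Inl x) (Inl v)"
  shows "AE \<omega> in P. solvec S X g \<omega> v = solvec (do_sys S SF \<sigma> \<xi>) X g' \<omega> v"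
proof -
  have fin: "finite (vars S)" "finite (cons S)" using wf by (auto simp: wf_csys_def)
  have scv: "\<And>f. f \<in> cons S \<Longrightarrow> scope S f \<subseteq> vars S" using wf by (auto simp: wf_csys_def)
  have mat: "matching S M" using mm by (simp add: max_matching_def)
  have disj: "T_I S M \<inter> T_O S M = {}" using TI_TO_disj[OF mm fin(2) fin(1)] .
  have TOVp: "T_O S M \<subseteq> Vp S" unfolding T_O_def using alt_last_Vp by blast
  have TCdef: "T_C S M = Vp S - T_I S M - T_O S M" by (simp add: T_C_def)
  define good where "good u \<longleftrightarrow> (AE \<omega> in P. solvec S X g \<omega> u = solvec S X g' \<omega> u)" for u
  define unreach where "unreach u \<longleftrightarrow> (\<forall>x\<in>SV. \<not> dpath S M run (Inl x) (Inl u))" for u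
  have sigSV: "\<And>f. f \<in> SF \<Longrightarrow> \<sigma> f \<in> SV" using enum by (auto simp: bij_betw_def)
  have Kcases: "K \<in> fst ` set (co_clusters S (T_C S M) (T_C S M) run) \<or> K \<in> components S (T_I S M) \<or>
       K \<in> components S (T_O S M) \<or> K \<in> (\<lambda>w. {Inl w}) ` exo S" if "K \<in> CO_clusters S M run" for K
    using that unfolding CO_clusters_def by auto
  have runTC: "K \<subseteq> T_C S M" if "K \<in> fst ` set (co_clusters S (T_C S M) (T_C S M) run)" for K
    using that run_sub[OF run] by force
  have step: "AE \<omega> in P. (\<forall>u\<in>VS S {f. Inr f \<in> C} - {u. Inl u \<in> C}. solvec S X g \<omega> u = solvec S X g' \<omega> u) \<longrightarrow>
                    (\<forall>u\<in>{u. Inl u \<in> C}. solvec S X g \<omega> u = solvec S X g' \<omega> u)"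
    if C: "C \<in> CO_clusters S M run" "C \<subseteq> T_C S M \<union> T_O S M" "\<forall>f\<in>SF. Inr f \<notin> C" for C
  proof -
    have CVp: "C \<subseteq> Vp S" using C(2) TOVp TCdef by blast
    have "C \<inter> Inl ` exo S = {}" using CVp by (auto simp: Vp_def)
    moreover have "C \<inter> T_I S M = {}" using C(2) TCdef disj by blast
    ultimately have us: "uniquely_solvable S P X {f. Inr f \<in> C} {v. Inl v \<in> C}"
      using mus C(1) unfolding max_uniquely_solvable_def by blast
    have "{f. Inr f \<in> C} \<subseteq> cons S" "{f. Inr f \<in> C} \<inter> SF = {}" "{v. Inl v \<in> C} \<subseteq> vars S - exo S"
      using CVp C(3) by (auto simp: Vp_def)
    from core[OF wf sol sol' us this] show ?thesis .
  qed
  have TOgood: "good u" if uT: "Inl u \<in> T_O S M" and ur: "unreach u" for u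
  proof -
    define Rel where "Rel = {(a, b). a \<in> T_O S M \<and> b \<in> T_O S M \<and> adjB S a b}"
    define C where "C = {y. (Inl u, y) \<in> Rel\<^sup>*}"
    have Ccomp: "C \<in> components S (T_O S M)" unfolding components_def C_def Rel_def using uT by blast
    then have CCL: "C \<in> CO_clusters S M run" unfolding CO_clusters_def by blast
    have Csub: "C \<subseteq> T_O S M" using comp_sub[OF Ccomp] .
    have symR: "sym Rel" unfolding Rel_def sym_def using adjB_sym by blast
    have uC: "Inl u \<in> C" by (simp add: C_def)
    have noSF: "\<forall>f\<in>SF. Inr f \<notin> C"
    proof (intro ballI notI)
      fix f assume f: "f \<in> SF" "Inr f \<in> C"
      have sf: "Inl (\<sigma> f) \<in> Inr ` SF \<union> Inl ` SV" using sigSV f by blast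
      have fK: "Inr f \<in> Inr ` SF \<union> Inl ` SV" using f by blast
      have "Inl (\<sigma> f) \<in> C"
        using Kcases[OF cl]
      proof (elim disjE)
        assume "Inr ` SF \<union> Inl ` SV \<in> fst ` set (co_clusters S (T_C S M) (T_C S M) run)"
        then have "Inr f \<in> T_C S M" using runTC fK by blast
        then show ?thesis using f(2) Csub TCdef by blast
      next
        assume "Inr ` SF \<union> Inl ` SV \<in> components S (T_I S M)"
        then have "Inr f \<in> T_I S M" using comp_sub fK by blast
        then show ?thesis using f(2) Csub disj by blast
      next
        assume "Inr ` SF \<union> Inl ` SV \<in> components S (T_O S M)"
        then obtain z where z: "Inr ` SF \<union> Inl ` SV = {y. (z, y) \<in> Rel\<^sup>*}"
          unfolding components_def Rel_def by blast
        have r1: "(z, Inr f) \<in> Rel\<^sup>*" and r2: "(z, Inl (\<sigma> f)) \<in> Rel\<^sup>*"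
          using z fK sf by auto
        have r3: "(Inl u, Inr f) \<in> Rel\<^sup>*" using f(2) by (simp add: C_def)
        have r4: "(Inr f, z) \<in> Rel\<^sup>*" using symD[OF sym_rtrancl[OF symR] r1] .
        have "(Inl u, Inl (\<sigma> f)) \<in> Rel\<^sup>*" using rtrancl_trans[OF rtrancl_trans[OF r3 r4] r2] .
        then show ?thesis by (simp add: C_def)
      next
        assume "Inr ` SF \<union> Inl ` SV \<in> (\<lambda>w. {Inl w}) ` exo S"
        then show ?thesis using fK by auto
      qed
      then have "dpath S M run (Inl (\<sigma> f)) (Inl u)" using dpath_same[OF CCL _ uC] by blast
      then show False using ur sigSV f(1) unfolding unreach_def by blast
    qed
    have inp: "\<forall>u'\<in>VS S {f. Inr f \<in> C} - {u. Inl u \<in> C}. u' \<in> exo S \<and> u' \<in> vars S"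
    proof
      fix u' assume u': "u' \<in> VS S {f. Inr f \<in> C} - {u. Inl u \<in> C}"
      then obtain f where f: "Inr f \<in> C" "u' \<in> scope S f" "Inl u' \<notin> C" by (auto simp: VS_def)
      have fc: "f \<in> cons S" using f(1) Csub TOVp by (auto simp: Vp_def)
      have uv: "u' \<in> vars S" using scv fc f(2) by blast
      show "u' \<in> exo S \<and> u' \<in> vars S"
      proof (rule ccontr)
        assume "\<not> (u' \<in> exo S \<and> u' \<in> vars S)"
        then have ne: "u' \<notin> exo S" using uv by blast
        have uo: "Inl u' \<in> T_O S M" using TO_closed[OF mat _ _ f(2)] f(1) Csub uv ne by blast
        have "adjB S (Inr f) (Inl u')" using fc uv f(2) by (auto simp: adjB_def)
        then have "(Inr f, Inl u') \<in> Rel" using f(1) Csub uo by (auto simp: Rel_def)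
        moreover have "(Inl u, Inr f) \<in> Rel\<^sup>*" using f(1) by (simp add: C_def)
        ultimately have "(Inl u, Inl u') \<in> Rel\<^sup>*" by (simp add: rtrancl.rtrancl_into_rtrancl)
        then have "Inl u' \<in> C" by (simp add: C_def)
        then show False using f(3) by blast
      qed
    qed
    have CT: "C \<subseteq> T_C S M \<union> T_O S M" using Csub by blast
    have "AE \<omega> in P. \<forall>u'\<in>{u. Inl u \<in> C}. solvec S X g \<omega> u' = solvec S X g' \<omega> u'"
      using step[OF CCL CT noSF] by (rule eventually_mono) (use inp in \<open>auto simp: solvec_def\<close>)
    then show "good u" unfolding good_def by (rule eventually_mono) (use uC in auto)
  qed
  have TCind: "co_run S R rs \<Longrightarrow> R \<subseteq> T_C S M \<Longrightarrow>
      set (co_clusters S (T_C S M) R rs) \<subseteq> set (co_clusters S (T_C S M) (T_C S M) run) \<Longrightarrow>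
      (\<forall>u. Inl u \<in> T_C S M - R \<longrightarrow> unreach u \<longrightarrow> good u) \<Longrightarrow>
      (\<forall>u. Inl u \<in> T_C S M \<longrightarrow> unreach u \<longrightarrow> good u)" for rs R
  proof (induction rs arbitrary: R)
    case Nil then show ?case by simp
  next
    case (Cons Fs rest)
    define C where "C = clusterOf S R Fs"
    define In where "In = nbrs S (T_C S M) (Inr ` Fs) - nbrs S R (Inr ` Fs)"
    have msc: "min_self_contained S R Fs" and r': "co_run S (R - C) rest"
      using Cons.prems(1) by (auto simp: C_def)
    have CR: "C \<subseteq> R" using clusterOf_sub[OF msc] by (simp add: C_def)
    have CIn: "(C, In) \<in> set (co_clusters S (T_C S M) (T_C S M) run)"
      using Cons.prems(3) by (simp add: C_def In_def)
    have CF: "C \<in> fst ` set (co_clusters S (T_C S M) (T_C S M) run)" using CIn by force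
    then have CCL: "C \<in> CO_clusters S M run" unfolding CO_clusters_def by simp
    have CTC: "C \<subseteq> T_C S M" using CR Cons.prems(2) by blast
    have Cf: "\<And>f. Inr f \<in> C \<Longrightarrow> f \<in> Fs" using nbrs_Inl unfolding C_def clusterOf_def by force
    have Cgood: "good u" if uC: "Inl u \<in> C" and ur: "unreach u" for u
    proof -
      have noSF: "\<forall>f\<in>SF. Inr f \<notin> C"
      proof (intro ballI notI)
        fix f assume f: "f \<in> SF" "Inr f \<in> C"
        have sf: "Inl (\<sigma> f) \<in> Inr ` SF \<union> Inl ` SV" using sigSV f by blast
        have fK: "Inr f \<in> Inr ` SF \<union> Inl ` SV" using f by blast
        have "Inl (\<sigma> f) \<in> C"
          using Kcases[OF cl]
        proof (elim disjE)
          assume a: "Inr ` SF \<union> Inl ` SV \<in> fst ` set (co_clusters S (T_C S M) (T_C S M) run)"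
          have "Inr ` SF \<union> Inl ` SV = C" using run_disj[OF run a CF fK f(2)] .
          then show ?thesis using sf by blast
        next
          assume "Inr ` SF \<union> Inl ` SV \<in> components S (T_I S M)"
          then have "Inr f \<in> T_I S M" using comp_sub fK by blast
          then show ?thesis using f(2) CTC TCdef by blast
        next
          assume "Inr ` SF \<union> Inl ` SV \<in> components S (T_O S M)"
          then have "Inr f \<in> T_O S M" using comp_sub fK by blast
          then show ?thesis using f(2) CTC TCdef by blast
        next
          assume "Inr ` SF \<union> Inl ` SV \<in> (\<lambda>w. {Inl w}) ` exo S"
          then show ?thesis using fK by auto
        qed
        then have "dpath S M run (Inl (\<sigma> f)) (Inl u)" using dpath_same[OF CCL _ uC] by blast
        then show False using ur sigSV f(1) unfolding unreach_def by blast
      qed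
      have unr: "unreach u'" if "(Inl u', C) \<in> CO_edges S M run" for u'
        using dpath_step[OF _ that CCL uC] ur unfolding unreach_def by blast
      have inp: "good u'" if u': "u' \<in> VS S {f. Inr f \<in> C} - {u. Inl u \<in> C}" for u'
      proof -
        obtain f where f: "Inr f \<in> C" "u' \<in> scope S f" "Inl u' \<notin> C" using u' by (auto simp: VS_def)
        have fTC: "Inr f \<in> T_C S M" using f(1) CTC by blast
        have fc: "f \<in> cons S" using fTC TCdef by (auto simp: Vp_def)
        have uv: "u' \<in> vars S" using scv fc f(2) by blast
        show "good u'"
        proof (cases "u' \<in> exo S")
          case True then show ?thesis unfolding good_def using uv by (simp add: solvec_def)
        next
          case False
          have adj: "adjB S (Inl u') (Inr f)" and adj2: "adjB S (Inr f) (Inl u')"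
            using fc uv f(2) by (auto simp: adjB_def)
          have notI: "Inl u' \<notin> T_I S M"
          proof
            assume "Inl u' \<in> T_I S M"
            then have "Inr f \<in> T_I S M" using TI_closed[OF mat _ fc f(2)] by blast
            then show False using fTC TCdef by blast
          qed
          have uVp: "Inl u' \<in> Vp S" using uv False by (simp add: Vp_def)
          consider "Inl u' \<in> T_O S M" | "Inl u' \<in> T_C S M" using uVp notI TCdef by blast
          then show ?thesis
          proof cases
            case 1
            have edge: "(Inl u', C) \<in> CO_edges S M run"
              unfolding CO_edges_def using CCL f(1) adj 1 fTC by blast
            then show ?thesis using TOgood 1 unr by blast
          next
            case 2
            have fFs: "f \<in> Fs" using Cf f(1) .
            have notR: "Inl u' \<notin> R"
            proof
              assume "Inl u' \<in> R"
              then have "Inl u' \<in> nbrs S R (Inr ` Fs)" using adj2 fFs unfolding nbrs_def by blast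
              then show False using f(3) unfolding C_def clusterOf_def by blast
            qed
            have "Inl u' \<in> In" unfolding In_def nbrs_def using 2 adj2 fFs notR by blast
            then have edge: "(Inl u', C) \<in> CO_edges S M run" unfolding CO_edges_def using CIn by blast
            then show ?thesis using Cons.prems(4) 2 notR unr by blast
          qed
        qed
      qed
      have finVS: "finite (VS S {f. Inr f \<in> C} - {u. Inl u \<in> C})"
      proof (rule finite_subset)
        show "VS S {f. Inr f \<in> C} - {u. Inl u \<in> C} \<subseteq> vars S"
          using CTC TCdef scv by (force simp: VS_def Vp_def)
      qed (rule fin(1))
      have AEi: "AE \<omega> in P. \<forall>u'\<in>VS S {f. Inr f \<in> C} - {u. Inl u \<in> C}. solvec S X g \<omega> u' = solvec S X g' \<omega> u'"
        by (rule AE_finite_allI[OF finVS]) (use inp in \<open>auto simp: good_def\<close>)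
      have CT: "C \<subseteq> T_C S M \<union> T_O S M" using CTC by blast
      have "AE \<omega> in P. \<forall>u'\<in>{u. Inl u \<in> C}. solvec S X g \<omega> u' = solvec S X g' \<omega> u'"
        using step[OF CCL CT noSF] AEi by eventually_elim blast
      then show "good u" unfolding good_def by (rule eventually_mono) (use uC in auto)
    qed
    have s1: "R - C \<subseteq> T_C S M" using Cons.prems(2) by blast
    have s2: "set (co_clusters S (T_C S M) (R - C) rest) \<subseteq> set (co_clusters S (T_C S M) (T_C S M) run)"
      using Cons.prems(3) by (auto simp: C_def)
    have s3: "\<forall>u. Inl u \<in> T_C S M - (R - C) \<longrightarrow> unreach u \<longrightarrow> good u"
      using Cons.prems(4) Cgood by blast
    show ?case using Cons.IH[OF r' s1 s2 s3] .
  qed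
  have ur: "unreach v" using nopath by (simp add: unreach_def)
  have "good v"
  proof (cases "Inl v \<in> T_O S M")
    case True then show ?thesis using TOgood ur by blast
  next
    case False
    then have "Inl v \<in> T_C S M" using v(2) by blast
    then show ?thesis using TCind[OF run subset_refl subset_refl] ur by blast
  qed
  then show ?thesis unfolding good_def solvec_do .
qed

end
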